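(* Let $n\in\mathbb N$ with $n\ge 8$ and $i\in\{1,2\}$. Then $r(T_n^i,T_n')=r(T_n^i,T_n^* )=2n-5$.
   Context: All graphs are finite and simple; a graph "contains" $H$ if it has a subgraph isomorphic to $H$. For graphs $G_1,G_2$, the Ramsey number $r(G_1,G_2)$ is the smallest positive integer $N$ such that for every graph $G$ on $N$ vertices, either $G$ contains a copy of $G_1$ or the complement $\overline G$ contains a copy of $G_2$. For $n\ge 5$, $T_n^1$ is the tree with vertex set $\{v_0,\ldots,v_{n-1}\}$ and edges $v_0v_1,\ldots,v_0v_{n-3},v_{n-4}v_{n-2},v_{n-3}v_{n-1}$, and $T_n^2$ is the tree on the same vertex set with edges $v_0v_1,\ldots,v_0v_{n-3},v_{n-3}v_{n-2},v_{n-3}v_{n-1}$. For $n\ge 4$, $T_n'$ is the unique (up to isomorphism) tree on $n$ vertices with maximum degree $n-2$, and $T_n^*$ is the tree on $\{v_0,\ldots,v_{n-1}\}$ with edges $v_0v_1,\ldots,v_0v_{n-3},v_{n-3}v_{n-2},v_{n-2}v_{n-1}$. *)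

theory Defs
  imports Main
begin

type_synonym 'a graph = "'a set \<times> 'a set set"

definition simple_graph :: "'a graph \<Rightarrow> bool" where
  "simple_graph G \<longleftrightarrow> finite (fst G) \<and>
     (\<forall>e\<in>snd G. \<exists>x y. x \<in> fst G \<and> y \<in> fst G \<and> x \<noteq> y \<and> e = {x, y})"

definition contains :: "'a graph \<Rightarrow> 'b graph \<Rightarrow> bool" where
  "contains G H \<longleftrightarrow> (\<exists>f. inj_on f (fst H) \<and> f ` fst H \<subseteq> fst G \<and>
      (\<forall>e\<in>snd H. f ` e \<in> snd G))"

definition complement :: "'a graph \<Rightarrow> 'a graph" where
  "complement G = (fst G, {{x, y} | x y. x \<in> fst G \<and> y \<in> fst G \<and> x \<noteq> y} - snd G)"

text \<open>Graphs on N vertices are taken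
  (without loss of generality, up to isomorphism) with vertex set {0..<N}.\<close>
definition ramsey :: "'a graph \<Rightarrow> 'b graph \<Rightarrow> nat" where
  "ramsey G1 G2 = (LEAST N. 0 < N \<and>
     (\<forall>E. simple_graph ({0..<N}, E) \<longrightarrow>
        contains ({0..<N::nat}, E) G1 \<or> contains (complement ({0..<N}, E)) G2))"

text \<open>The trees, on vertex set {0..<n} (vertex v_k is k).\<close>

definition T1 :: "nat \<Rightarrow> nat graph" where
  "T1 n = ({0..<n}, {{0, k} | k. 1 \<le> k \<and> k \<le> n - 3} \<union> {{n - 4, n - 2}, {n - 3, n - 1}})"

definition T2 :: "nat \<Rightarrow> nat graph" where
  "T2 n = ({0..<n}, {{0, k} | k. 1 \<le> k \<and> k \<le> n - 3} \<union> {{n - 3, n - 2}, {n - 3, n - 1}})"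

definition Tstar :: "nat \<Rightarrow> nat graph" where
  "Tstar n = ({0..<n}, {{0, k} | k. 1 \<le> k \<and> k \<le> n - 3} \<union> {{n - 3, n - 2}, {n - 2, n - 1}})"

definition Tprime :: "nat \<Rightarrow> nat graph" where
  "Tprime n = ({0..<n}, {{0, k} | k. 1 \<le> k \<and> k \<le> n - 2} \<union> {{n - 2, n - 1}})"

definition Ti :: "nat \<Rightarrow> nat \<Rightarrow> nat graph" where
  "Ti i n = (if i = 1 then T1 n else T2 n)"

end

theory Submission
  imports Defs
begin


lemma inj_union: assumes "inj_on f A" "inj_on f B" "f ` A \<inter> f ` B = {}" shows "inj_on f (A \<union> B)"
proof (rule inj_onI)
  fix x y assume "x \<in> A \<union> B" "y \<in> A \<union> B" "f x = f y"
  then show "x = y" using assms unfolding inj_on_def by (metis IntI empty_iff image_eqI UnE)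
qed

lemma emb_T1:
  fixes E :: "'a set set" and m :: nat
  assumes m: "m \<ge> 2" and S: "finite S" "S \<subseteq> V" "card S \<ge> m - 2" "\<forall>s\<in>S. {c,s} \<in> E"
  and V: "c\<in>V" "a\<in>V" "b\<in>V" "a'\<in>V" "b'\<in>V"
  and dist: "distinct [c,a,b,a',b']" and notS: "c\<notin>S" "a\<notin>S" "b\<notin>S" "a'\<notin>S" "b'\<notin>S"
  and E: "{c,a}\<in>E" "{c,b}\<in>E" "{a,a'}\<in>E" "{b,b'}\<in>E"
  shows "contains (V,E) (T1 (m+3))"
proof -
  obtain g where g: "g ` {1..m-2} \<subseteq> S" "inj_on g {1..m-2}"
    using card_le_inj[of "{1..m-2}" S] S by auto
  define f where "f k = (if k = 0 then c else if k = m-1 then a else if k = m then b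
     else if k = m+1 then a' else if k = m+2 then b' else g k)" for k
  let ?A = "{0, m-1, m, m+1, m+2}" and ?B = "{1..m-2}"
  have AB: "{0..<m+3} = ?A \<union> ?B" using m by auto
  have fv: "f 0 = c" "f (m-1) = a" "f m = b" "f (m+1) = a'" "f (m+2) = b'" using m by (auto simp: f_def)
  have fA: "f ` ?A = {c,a,b,a',b'}" using fv by simp
  have cA: "card ?A = 5" using m by (auto simp: card_insert_if)
  have cA': "card {c,a,b,a',b'} = 5" using dist by simp
  have injA: "inj_on f ?A" using inj_on_iff_eq_card[of ?A f] fA cA cA' by simp
  have fB: "\<forall>k\<in>?B. f k = g k" using m by (auto simp: f_def)
  have injB: "inj_on f ?B" using inj_on_cong[of ?B f g] fB g by simp
  have fBS: "f ` ?B \<subseteq> S" using fB g by auto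
  have disj: "f ` ?A \<inter> f ` ?B = {}" unfolding fA using fBS notS by blast
  have inj: "inj_on f {0..<m+3}" unfolding AB by (rule inj_union[OF injA injB disj])
  have img: "f ` {0..<m+3} \<subseteq> V" unfolding AB image_Un fA using fBS V S by blast
  have edges: "\<forall>e\<in>snd (T1 (m+3)). f ` e \<in> E"
  proof
    fix e assume "e \<in> snd (T1 (m+3))"
    then have "(\<exists>k. e = {0,k} \<and> 1 \<le> k \<and> k \<le> m) \<or> e = {m-1, m+1} \<or> e = {m, m+2}"
      unfolding T1_def using m by auto
    then show "f ` e \<in> E"
    proof (elim disjE exE conjE)
      fix k assume k: "e = {0,k}" "1 \<le> k" "k \<le> m"
      then have fe: "f ` e = {c, f k}" using fv by simp
      have "k = m - 1 \<or> k = m \<or> k \<in> ?B" using k by auto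
      then show ?thesis
      proof (elim disjE)
        assume "k \<in> ?B"
        then have "f k \<in> S" using fBS by blast
        then show ?thesis using fe S by simp
      qed (use fe fv E in simp_all)
    next
      assume "e = {m-1, m+1}" then show ?thesis using E fv by simp
    next
      assume "e = {m, m+2}" then show ?thesis using E fv by simp
    qed
  qed
  have fT: "fst (T1 (m+3)) = {0..<m+3}" by (simp add: T1_def)
  show ?thesis unfolding contains_def
    apply (rule exI[of _ f])
    apply (simp only: fT fst_conv snd_conv)
    using inj img edges by (intro conjI)
qed


lemma emb_T2:
  fixes E :: "'a set set" and m :: nat
  assumes m: "m \<ge> 2" and S: "finite S" "S \<subseteq> V" "card S \<ge> m - 1" "\<forall>s\<in>S. {c,s} \<in> E"
  and V: "c\<in>V" "a\<in>V" "a'\<in>V" "a''\<in>V"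
  and dist: "distinct [c,a,a',a'']" and notS: "c\<notin>S" "a\<notin>S" "a'\<notin>S" "a''\<notin>S"
  and E: "{c,a}\<in>E" "{a,a'}\<in>E" "{a,a''}\<in>E"
  shows "contains (V,E) (T2 (m+3))"
proof -
  obtain g where g: "g ` {1..m-1} \<subseteq> S" "inj_on g {1..m-1}"
    using card_le_inj[of "{1..m-1}" S] S by auto
  define f where "f k = (if k = 0 then c else if k = m then a
     else if k = m+1 then a' else if k = m+2 then a'' else g k)" for k
  let ?A = "{0, m, m+1, m+2}" and ?B = "{1..m-1}"
  have AB: "{0..<m+3} = ?A \<union> ?B" using m by auto
  have fv: "f 0 = c" "f m = a" "f (m+1) = a'" "f (m+2) = a''" using m by (auto simp: f_def)
  have fA: "f ` ?A = {c,a,a',a''}" using fv by simp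
  have cA: "card ?A = 4" using m by (auto simp: card_insert_if)
  have cA': "card {c,a,a',a''} = 4" using dist by simp
  have injA: "inj_on f ?A" using inj_on_iff_eq_card[of ?A f] fA cA cA' by simp
  have fB: "\<forall>k\<in>?B. f k = g k" using m by (auto simp: f_def)
  have injB: "inj_on f ?B" using inj_on_cong[of ?B f g] fB g by simp
  have fBS: "f ` ?B \<subseteq> S" using fB g by auto
  have disj: "f ` ?A \<inter> f ` ?B = {}" unfolding fA using fBS notS by blast
  have inj: "inj_on f {0..<m+3}" unfolding AB by (rule inj_union[OF injA injB disj])
  have img: "f ` {0..<m+3} \<subseteq> V" unfolding AB image_Un fA using fBS V S by blast
  have edges: "\<forall>e\<in>snd (T2 (m+3)). f ` e \<in> E"
  proof
    fix e assume "e \<in> snd (T2 (m+3))"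
    then have "(\<exists>k. e = {0,k} \<and> 1 \<le> k \<and> k \<le> m) \<or> e = {m, m+1} \<or> e = {m, m+2}"
      unfolding T2_def using m by auto
    then show "f ` e \<in> E"
    proof (elim disjE exE conjE)
      fix k assume k: "e = {0,k}" "1 \<le> k" "k \<le> m"
      then have fe: "f ` e = {c, f k}" using fv by simp
      have "k = m \<or> k \<in> ?B" using k by auto
      then show ?thesis
      proof (elim disjE)
        assume "k \<in> ?B"
        then have "f k \<in> S" using fBS by blast
        then show ?thesis using fe S by simp
      qed (use fe fv E in simp_all)
    next
      assume "e = {m, m+1}" then show ?thesis using E fv by simp
    next
      assume "e = {m, m+2}" then show ?thesis using E fv by simp
    qed
  qed
  have fT: "fst (T2 (m+3)) = {0..<m+3}" by (simp add: T2_def)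
  show ?thesis unfolding contains_def
    apply (rule exI[of _ f])
    apply (simp only: fT fst_conv snd_conv)
    using inj img edges by (intro conjI)
qed


lemma emb_Tp:
  fixes E :: "'a set set" and m :: nat
  assumes m: "m \<ge> 2" and S: "finite S" "S \<subseteq> V" "card S \<ge> m" "\<forall>s\<in>S. {c,s} \<in> E"
  and V: "c\<in>V" "a\<in>V" "a'\<in>V"
  and dist: "distinct [c,a,a']" and notS: "c\<notin>S" "a\<notin>S" "a'\<notin>S"
  and E: "{c,a}\<in>E" "{a,a'}\<in>E"
  shows "contains (V,E) (Tprime (m+3))"
proof -
  obtain g where g: "g ` {1..m} \<subseteq> S" "inj_on g {1..m}"
    using card_le_inj[of "{1..m}" S] S by auto
  define f where "f k = (if k = 0 then c else if k = m+1 then a else if k = m+2 then a' else g k)" for k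
  let ?A = "{0, m+1, m+2}" and ?B = "{1..m}"
  have AB: "{0..<m+3} = ?A \<union> ?B" using m by auto
  have fv: "f 0 = c" "f (m+1) = a" "f (m+2) = a'" using m by (auto simp: f_def)
  have fA: "f ` ?A = {c,a,a'}" using fv by simp
  have cA: "card ?A = 3" using m by (auto simp: card_insert_if)
  have cA': "card {c,a,a'} = 3" using dist by simp
  have injA: "inj_on f ?A" using inj_on_iff_eq_card[of ?A f] fA cA cA' by simp
  have fB: "\<forall>k\<in>?B. f k = g k" using m by (auto simp: f_def)
  have injB: "inj_on f ?B" using inj_on_cong[of ?B f g] fB g by simp
  have fBS: "f ` ?B \<subseteq> S" using fB g by auto
  have disj: "f ` ?A \<inter> f ` ?B = {}" unfolding fA using fBS notS by blast
  have inj: "inj_on f {0..<m+3}" unfolding AB by (rule inj_union[OF injA injB disj])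
  have img: "f ` {0..<m+3} \<subseteq> V" unfolding AB image_Un fA using fBS V S by blast
  have edges: "\<forall>e\<in>snd (Tprime (m+3)). f ` e \<in> E"
  proof
    fix e assume "e \<in> snd (Tprime (m+3))"
    then have "(\<exists>k. e = {0,k} \<and> 1 \<le> k \<and> k \<le> m+1) \<or> e = {m+1, m+2}"
      unfolding Tprime_def using m by auto
    then show "f ` e \<in> E"
    proof (elim disjE exE conjE)
      fix k assume k: "e = {0,k}" "1 \<le> k" "k \<le> m+1"
      then have fe: "f ` e = {c, f k}" using fv by simp
      have "k = m+1 \<or> k \<in> ?B" using k by auto
      then show ?thesis
      proof (elim disjE)
        assume "k \<in> ?B"
        then have "f k \<in> S" using fBS by blast
        then show ?thesis using fe S by simp
      qed (use fe fv E in simp_all)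
    next
      assume "e = {m+1, m+2}" then show ?thesis using E fv by simp
    qed
  qed
  have fT: "fst (Tprime (m+3)) = {0..<m+3}" by (simp add: Tprime_def)
  show ?thesis unfolding contains_def
    apply (rule exI[of _ f])
    apply (simp only: fT fst_conv snd_conv)
    using inj img edges by (intro conjI)
qed


lemma emb_Ts:
  fixes E :: "'a set set" and m :: nat
  assumes m: "m \<ge> 2" and S: "finite S" "S \<subseteq> V" "card S \<ge> m - 1" "\<forall>s\<in>S. {c,s} \<in> E"
  and V: "c\<in>V" "a\<in>V" "a'\<in>V" "a''\<in>V"
  and dist: "distinct [c,a,a',a'']" and notS: "c\<notin>S" "a\<notin>S" "a'\<notin>S" "a''\<notin>S"
  and E: "{c,a}\<in>E" "{a,a'}\<in>E" "{a',a''}\<in>E"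
  shows "contains (V,E) (Tstar (m+3))"
proof -
  obtain g where g: "g ` {1..m-1} \<subseteq> S" "inj_on g {1..m-1}"
    using card_le_inj[of "{1..m-1}" S] S by auto
  define f where "f k = (if k = 0 then c else if k = m then a
     else if k = m+1 then a' else if k = m+2 then a'' else g k)" for k
  let ?A = "{0, m, m+1, m+2}" and ?B = "{1..m-1}"
  have AB: "{0..<m+3} = ?A \<union> ?B" using m by auto
  have fv: "f 0 = c" "f m = a" "f (m+1) = a'" "f (m+2) = a''" using m by (auto simp: f_def)
  have fA: "f ` ?A = {c,a,a',a''}" using fv by simp
  have cA: "card ?A = 4" using m by (auto simp: card_insert_if)
  have cA': "card {c,a,a',a''} = 4" using dist by simp
  have injA: "inj_on f ?A" using inj_on_iff_eq_card[of ?A f] fA cA cA' by simp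
  have fB: "\<forall>k\<in>?B. f k = g k" using m by (auto simp: f_def)
  have injB: "inj_on f ?B" using inj_on_cong[of ?B f g] fB g by simp
  have fBS: "f ` ?B \<subseteq> S" using fB g by auto
  have disj: "f ` ?A \<inter> f ` ?B = {}" unfolding fA using fBS notS by blast
  have inj: "inj_on f {0..<m+3}" unfolding AB by (rule inj_union[OF injA injB disj])
  have img: "f ` {0..<m+3} \<subseteq> V" unfolding AB image_Un fA using fBS V S by blast
  have edges: "\<forall>e\<in>snd (Tstar (m+3)). f ` e \<in> E"
  proof
    fix e assume "e \<in> snd (Tstar (m+3))"
    then have "(\<exists>k. e = {0,k} \<and> 1 \<le> k \<and> k \<le> m) \<or> e = {m, m+1} \<or> e = {m+1, m+2}"
      unfolding Tstar_def using m by auto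
    then show "f ` e \<in> E"
    proof (elim disjE exE conjE)
      fix k assume k: "e = {0,k}" "1 \<le> k" "k \<le> m"
      then have fe: "f ` e = {c, f k}" using fv by simp
      have "k = m \<or> k \<in> ?B" using k by auto
      then show ?thesis
      proof (elim disjE)
        assume "k \<in> ?B"
        then have "f k \<in> S" using fBS by blast
        then show ?thesis using fe S by simp
      qed (use fe fv E in simp_all)
    next
      assume "e = {m, m+1}" then show ?thesis using E fv by simp
    next
      assume "e = {m+1, m+2}" then show ?thesis using E fv by simp
    qed
  qed
  have fT: "fst (Tstar (m+3)) = {0..<m+3}" by (simp add: Tstar_def)
  show ?thesis unfolding contains_def
    apply (rule exI[of _ f])
    apply (simp only: fT fst_conv snd_conv)
    using inj img edges by (intro conjI)
qed




lemma cdiff: "finite X \<Longrightarrow> card X \<le> k \<Longrightarrow> card A - k \<le> card (A - X)"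
  using diff_card_le_card_Diff[of X A] by linarith

lemma c2: "card {x,y} \<le> 2" by (simp add: card_insert_if)
lemma c3: "card {x,y,z} \<le> 3" by (simp add: card_insert_if)
lemma c4: "card {x,y,z,w} \<le> 4" by (simp add: card_insert_if)

lemma pick: assumes "finite X" "card X \<le> j" "j < card A" shows "\<exists>x\<in>A. x \<notin> X"
proof (rule ccontr)
  assume "\<not> ?thesis"
  then have "A \<subseteq> X" by blast
  then have "card A \<le> card X" using assms(1) by (rule card_mono[rotated])
  then show False using assms by linarith
qed

lemma cd1: "card A - 1 \<le> card (A - {x})"
  using cdiff[of "{x}" 1 A] by simp
lemma cd2: "card A - 2 \<le> card (A - {x,y})"
  using cdiff[of "{x,y}" 2 A] c2[of x y] by simp
lemma cd3: "card A - 3 \<le> card (A - {x,y,z})"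
  using cdiff[of "{x,y,z}" 3 A] c3[of x y z] by simp
lemma cd4: "card A - 4 \<le> card (A - {x,y,z,w})"
  using cdiff[of "{x,y,z,w}" 4 A] c4[of x y z w] by simp

lemma pick1: "finite A \<Longrightarrow> 1 < card A \<Longrightarrow> \<exists>x\<in>A. x \<notin> {p}"
  using pick[of "{p}" 1 A] by simp
lemma pick2: "2 < card A \<Longrightarrow> \<exists>x\<in>A. x \<notin> {p,q}"
  using pick[of "{p,q}" 2 A] c2[of p q] by simp
lemma pick3: "3 < card A \<Longrightarrow> \<exists>x\<in>A. x \<notin> {p,q,r}"
  using pick[of "{p,q,r}" 3 A] c3[of p q r] by simp
lemma pick0: "0 < card A \<Longrightarrow> \<exists>x\<in>A. True"
  by (metis card.empty ex_in_conv less_irrefl)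

locale gr =
  fixes V :: "'a set" and E :: "'a set set" and m :: nat
  assumes finV: "finite V" and cardV: "card V = 2*m+1" and m5: "m \<ge> 5"
    and simpE: "\<forall>e\<in>E. \<exists>x y. x\<in>V \<and> y\<in>V \<and> x\<noteq>y \<and> e={x,y}"
begin

definition N where "N x = {y\<in>V. {x,y} \<in> E}"
definition NH where "NH x = {y\<in>V. y \<noteq> x \<and> {x,y} \<notin> E}"

lemma adjV: "{x,y} \<in> E \<Longrightarrow> x \<in> V \<and> y \<in> V \<and> x \<noteq> y"
  using simpE by (fastforce simp: doubleton_eq_iff)

lemma N_mem: "y \<in> N x \<longleftrightarrow> {x,y} \<in> E"
  using adjV unfolding N_def by auto

lemma N_sym: "y \<in> N x \<Longrightarrow> x \<in> N y"
  by (simp add: N_mem insert_commute)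

lemma N_V: "y \<in> N x \<Longrightarrow> y \<in> V \<and> x \<in> V \<and> x \<noteq> y"
  using adjV N_mem by blast

lemma N_irr: "x \<notin> N x"
  using N_V by blast

lemma NH_mem: "y \<in> NH x \<longleftrightarrow> y \<in> V \<and> y \<noteq> x \<and> y \<notin> N x"
  unfolding NH_def N_def by auto

lemma NH_sym: "x \<in> V \<Longrightarrow> y \<in> NH x \<Longrightarrow> x \<in> NH y"
  unfolding NH_def by (auto simp: insert_commute)

lemma finN: "finite (N x)" unfolding N_def using finV by simp
lemma finNH: "finite (NH x)" unfolding NH_def using finV by simp

lemma split: "x \<in> V \<Longrightarrow> y \<in> V \<Longrightarrow> x \<noteq> y \<Longrightarrow> y \<in> N x \<or> y \<in> NH x"
  using NH_mem by blast

lemma card_N_NH: assumes "x \<in> V" shows "card (N x) + card (NH x) = 2*m"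
proof -
  have "N x \<union> NH x = V - {x}" using N_V NH_mem assms by auto
  moreover have "N x \<inter> NH x = {}" using NH_mem by auto
  ultimately have "card (N x) + card (NH x) = card (V - {x})"
    using card_Un_disjoint[OF finN[of x] finNH[of x]] by simp
  also have "\<dots> = 2*m" using cardV assms finV by simp
  finally show ?thesis .
qed

lemma card_V2: "u \<in> V \<Longrightarrow> v \<in> V \<Longrightarrow> u \<noteq> v \<Longrightarrow> card (V - {u,v}) = 2*m - 1"
  using cardV finV by (simp add: card_Diff_subset)

lemma compl_eq: "complement (V,E) = (V, snd (complement (V,E)))"
  by (simp add: complement_def)

lemma compl_edge: "x \<in> V \<Longrightarrow> y \<in> NH x \<Longrightarrow> {x,y} \<in> snd (complement (V,E))"
  unfolding complement_def NH_def by auto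

abbreviation "PG \<equiv> contains (V,E) (T1 (m+3)) \<and> contains (V,E) (T2 (m+3))"

lemma big:
  assumes c: "c\<in>V" and ab: "a \<in> N c" "b \<in> N c" "a \<noteq> b" and dc: "card (N c) \<ge> m+2"
    and da: "card (N a) \<ge> 4" and db: "card (N b) \<ge> 4"
  shows PG
proof
  obtain a' where a': "a' \<in> N a" "a' \<notin> {c,b}" using pick2[of "N a" c b] da by auto
  obtain b' where b': "b' \<in> N b" "b' \<notin> {c,a,a'}" using pick3[of "N b" c a a'] db by auto
  let ?S = "N c - {a,b,a',b'}"
  have cS: "card ?S \<ge> m - 2" using cd4[of "N c" a b a' b'] dc by linarith
  show "contains (V,E) (T1 (m+3))"
  proof (rule emb_T1[where S = ?S])
    show "m \<ge> 2" using m5 by simp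
    show "finite ?S" using finN by simp
    show "?S \<subseteq> V" using N_V by blast
    show "\<forall>s\<in>?S. {c,s} \<in> E" using N_mem by blast
    show "distinct [c,a,b,a',b']" using a' b' ab N_V by auto
  qed (use cS c ab a' b' N_V N_mem N_irr in auto)
next
  obtain a' where a': "a' \<in> N a" "a' \<notin> {c}" using pick2[of "N a" c c] da by auto
  obtain a'' where a'': "a'' \<in> N a" "a'' \<notin> {c,a'}" using pick2[of "N a" c a'] da by auto
  let ?S = "N c - {a,a',a''}"
  have cS: "card ?S \<ge> m - 1" using cd3[of "N c" a a' a''] dc by linarith
  show "contains (V,E) (T2 (m+3))"
  proof (rule emb_T2[where S = ?S])
    show "m \<ge> 2" using m5 by simp
    show "finite ?S" using finN by simp
    show "?S \<subseteq> V" using N_V by blast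
    show "\<forall>s\<in>?S. {c,s} \<in> E" using N_mem by blast
    show "distinct [c,a,a',a'']" using a' a'' ab N_V by auto
  qed (use cS c ab a' a'' N_V N_mem N_irr in auto)
qed

end



context gr begin

definition R where "R c = V - N c - {c}"

lemma R_mem: "r \<in> R c \<longleftrightarrow> r \<in> V \<and> r \<notin> N c \<and> r \<noteq> c"
  unfolding R_def by auto

lemma finR: "finite (R c)" unfolding R_def using finV by simp

lemma card_R: assumes "c \<in> V" shows "card (R c) = 2*m - card (N c)"
proof -
  have "R c = (V - {c}) - N c" unfolding R_def by auto
  moreover have "N c \<subseteq> V - {c}" using N_V by blast
  ultimately show ?thesis using card_Diff_subset[OF finN] finV cardV assms by simp
qed

lemma NR: assumes "r \<in> R c" shows "N r \<subseteq> N c \<union> (R c - {r})"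
proof
  fix y assume y: "y \<in> N r"
  have "y \<noteq> c"
  proof
    assume "y = c" then have "r \<in> N c" using y N_sym by simp
    then show False using assms R_mem by simp
  qed
  then show "y \<in> N c \<union> (R c - {r})" using y N_V R_mem by auto
qed

lemma meetN: assumes "r \<in> R c" "card (R c) - 1 < card (N r)" shows "\<exists>a\<in>N r. a \<in> N c"
proof -
  have "card (R c - {r}) = card (R c) - 1" using assms(1) finR by simp
  then obtain a where "a \<in> N r" "a \<notin> R c - {r}"
    using pick[of "R c - {r}" "card (R c) - 1" "N r"] finR assms(2) by auto
  then show ?thesis using NR[OF assms(1)] by blast
qed

lemma Vne: "V \<noteq> {}" using cardV by auto

lemma core_deg: assumes mind: "\<forall>x\<in>V. card (N x) \<ge> m" shows PG
proof (cases "\<exists>c\<in>V. card (N c) \<ge> m+2")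
  case True
  then obtain c where c: "c\<in>V" "card (N c) \<ge> m+2" by blast
  obtain a where a: "a \<in> N c" using pick0[of "N c"] c m5 by auto
  obtain b where b: "b \<in> N c" "b \<notin> {a,a}" using pick2[of "N c" a a] c m5 by auto
  show ?thesis
    by (rule big[OF c(1) a b(1) _ c(2)]) (use b mind N_V m5 a in force)+
next
  case False
  hence up: "\<forall>x\<in>V. card (N x) \<le> m+1" by force
  show ?thesis
  proof (cases "\<exists>c\<in>V. card (N c) = m+1")
    case True
    then obtain c where c: "c\<in>V" "card (N c) = m+1" by blast
    have cR: "card (R c) = m - 1" using card_R[OF c(1)] c(2) by simp
    obtain r where r: "r \<in> R c" using pick0[of "R c"] cR m5 by auto
    have rV: "r \<in> V" "r \<notin> N c" "r \<noteq> c" using r R_mem by auto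
    obtain a where a: "a \<in> N r" "a \<in> N c" using meetN[OF r] cR mind rV m5 by force
    have ra: "r \<in> N a" using a N_sym by simp
    show ?thesis
    proof
      obtain b where b: "b \<in> N c" "b \<notin> {a,a}" using pick2[of "N c" a a] c m5 by auto
      have "card (N b) \<ge> m" using mind b N_V by blast
      then obtain b' where b': "b' \<in> N b" "b' \<notin> {c,a,r}" using pick3[of "N b" c a r] m5 by auto
      have cS: "card (N c - {a,b,b'}) \<ge> m - 2" using cd3[of "N c" a b b'] c by linarith
      show "contains (V,E) (T1 (m+3))"
      proof (rule emb_T1[where S = "N c - {a,b,b'}" and a' = r])
        show "m \<ge> 2" using m5 by simp
        show "finite (N c - {a,b,b'})" using finN by simp
        show "N c - {a,b,b'} \<subseteq> V" using N_V by blast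
        show "\<forall>s\<in>N c - {a,b,b'}. {c,s} \<in> E" using N_mem by blast
        show "distinct [c,a,b,r,b']" using a b b' rV N_V by auto
      qed (use cS c a b b' rV ra N_V N_mem N_irr in auto)
    next
      have "card (N a) \<ge> m" using mind a N_V by blast
      then obtain a'' where a'': "a'' \<in> N a" "a'' \<notin> {c,r}" using pick2[of "N a" c r] m5 by auto
      have cS: "card (N c - {a,a''}) \<ge> m - 1" using cd2[of "N c" a a''] c by linarith
      show "contains (V,E) (T2 (m+3))"
      proof (rule emb_T2[where S = "N c - {a,a''}" and a' = r])
        show "m \<ge> 2" using m5 by simp
        show "finite (N c - {a,a''})" using finN by simp
        show "N c - {a,a''} \<subseteq> V" using N_V by blast
        show "\<forall>s\<in>N c - {a,a''}. {c,s} \<in> E" using N_mem by blast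
        show "distinct [c,a,r,a'']" using a a'' rV N_V by auto
      qed (use cS c a a'' rV ra N_V N_mem N_irr in auto)
    qed
  next
    case False
    hence eq: "\<forall>x\<in>V. card (N x) = m" using mind up by force
    obtain c where c: "c \<in> V" using Vne by auto
    have cN: "card (N c) = m" using eq c by simp
    have cR: "card (R c) = m" using card_R[OF c] cN by simp
    show ?thesis
    proof
      obtain r1 where r1: "r1 \<in> R c" using pick0[of "R c"] cR m5 by auto
      have r1V: "r1 \<in> V" "r1 \<notin> N c" "r1 \<noteq> c" using r1 R_mem by auto
      obtain a where a: "a \<in> N r1" "a \<in> N c" using meetN[OF r1] cR eq r1V m5 by force
      have cNa: "card (N a - {c}) = m - 1" using eq a N_V N_sym by simp
      obtain r2 where r2: "r2 \<in> R c" "r2 \<notin> N a - {c}"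
        using pick[of "N a - {c}" "m-1" "R c"] cNa cR finN m5 by auto
      have r2V: "r2 \<in> V" "r2 \<notin> N c" "r2 \<noteq> c" "r2 \<notin> N a" using r2 R_mem by auto
      obtain b where b: "b \<in> N r2" "b \<in> N c" using meetN[OF r2(1)] cR eq r2V m5 by force
      have ba: "b \<noteq> a" using b r2V N_sym by blast
      have r12: "r1 \<noteq> r2" using a r2V N_sym by blast
      have cS: "card (N c - {a,b}) \<ge> m - 2" using cd2[of "N c" a b] cN by linarith
      show "contains (V,E) (T1 (m+3))"
      proof (rule emb_T1[where S = "N c - {a,b}" and a' = r1 and b' = r2])
        show "m \<ge> 2" using m5 by simp
        show "finite (N c - {a,b})" using finN by simp
        show "N c - {a,b} \<subseteq> V" using N_V by blast
        show "\<forall>s\<in>N c - {a,b}. {c,s} \<in> E" using N_mem by blast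
        show "distinct [c,a,b,r1,r2]" using a b ba r12 r1V r2V N_V by auto
      qed (use cS c a b r1V r2V N_V N_mem N_irr N_sym in auto)
    next
      show "contains (V,E) (T2 (m+3))"
      proof (cases "\<exists>a\<in>N c. \<exists>r1\<in>R c. \<exists>r2\<in>R c. r1 \<noteq> r2 \<and> r1 \<in> N a \<and> r2 \<in> N a")
        case True
        then obtain a r1 r2 where ar: "a\<in>N c" "r1\<in>R c" "r2\<in>R c" "r1 \<noteq> r2" "r1 \<in> N a" "r2 \<in> N a"
          by blast
        have cS: "card (N c - {a}) \<ge> m - 1" using cd1[of "N c" a] cN by linarith
        show ?thesis
        proof (rule emb_T2[where S = "N c - {a}" and a' = r1 and a'' = r2])
          show "m \<ge> 2" using m5 by simp
          show "finite (N c - {a})" using finN by simp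
          show "N c - {a} \<subseteq> V" using N_V by blast
          show "\<forall>s\<in>N c - {a}. {c,s} \<in> E" using N_mem by blast
          show "distinct [c,a,r1,r2]" using ar R_mem N_V by auto
        qed (use cS c ar R_mem N_V N_mem N_irr in auto)
      next
        case False
        note H = this
        have ex: "\<exists>r\<in>R c. card (N r \<inter> N c) \<le> m-2"
        proof (rule ccontr)
          assume "\<not> ?thesis"
          then have all: "\<forall>r\<in>R c. card (N r \<inter> N c) \<ge> m-1" by force
          obtain r1 where r1: "r1 \<in> R c" using pick0[of "R c"] cR m5 by auto
          obtain r2 where r2: "r2 \<in> R c" "r2 \<notin> {r1,r1}" using pick2[of "R c" r1 r1] cR m5 by auto
          let ?A1 = "N r1 \<inter> N c" and ?A2 = "N r2 \<inter> N c"
          have "card (?A1 \<union> ?A2) \<le> m" using card_mono[OF finN[of c], of "?A1 \<union> ?A2"] cN by auto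
          moreover have "card ?A1 + card ?A2 = card (?A1 \<union> ?A2) + card (?A1 \<inter> ?A2)"
            by (rule card_Un_Int) (simp_all add: finN)
          moreover have "card ?A1 \<ge> m-1" "card ?A2 \<ge> m-1" using all r1 r2 by auto
          ultimately have "card (?A1 \<inter> ?A2) > 0" using m5 by linarith
          then obtain a where "a \<in> ?A1 \<inter> ?A2" using pick0 by blast
          then show False using H r1 r2 N_sym by blast
        qed
        then obtain r where r: "r \<in> R c" "card (N r \<inter> N c) \<le> m-2" by blast
        have rV: "r \<in> V" "r \<notin> N c" "r \<noteq> c" using r R_mem by auto
        have "N r = (N r \<inter> N c) \<union> (N r \<inter> R c)" using NR[OF r(1)] by blast
        then have "card (N r) \<le> card (N r \<inter> N c) + card (N r \<inter> R c)"
          by (metis card_Un_le)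
        then have c2r: "card (N r \<inter> R c) \<ge> 2" using eq rV r m5 by force
        have "N r \<inter> R c \<subseteq> R c - {r}" using N_irr by blast
        then have "card (N r \<inter> R c) \<le> m - 1"
          using card_mono[OF _ \<open>N r \<inter> R c \<subseteq> R c - {r}\<close>] finR cR r by simp
        then have "card (N r \<inter> N c) > 0" using \<open>card (N r) \<le> _\<close> eq rV m5 by force
        then obtain a where a: "a \<in> N r \<inter> N c" using pick0 by blast
        have ra: "r \<in> N a" using a N_sym by blast
        obtain r' where r': "r' \<in> N r \<inter> R c" using pick0[of "N r \<inter> R c"] c2r by auto
        obtain r'' where r'': "r'' \<in> N r \<inter> R c" "r'' \<notin> {r'}"
          using pick1[of "N r \<inter> R c" r'] c2r finR by auto
        have "r' \<noteq> r" "r'' \<noteq> r" using r' r'' N_irr by blast+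
        then have nr': "r' \<notin> N a" and nr'': "r'' \<notin> N a" using H a r r' r'' ra by blast+
        have cS: "card (N a - {r}) \<ge> m - 1" using cd1[of "N a" r] eq a N_V by force
        show ?thesis
        proof (rule emb_T2[where S = "N a - {r}" and c = a and a = r and a' = r' and a'' = r''])
          show "m \<ge> 2" using m5 by simp
          show "finite (N a - {r})" using finN by simp
          show "N a - {r} \<subseteq> V" using N_V by blast
          show "\<forall>s\<in>N a - {r}. {a,s} \<in> E" using N_mem by blast
          show "distinct [a,r,r',r'']" using a r' r'' R_mem N_V N_irr by auto
        qed (use cS a r' r'' nr' nr'' ra R_mem N_V N_mem N_irr in auto)
      qed
    qed
  qed
qed

end



context gr begin

lemma noTp_cond:
  assumes nT: "\<not> contains (complement (V,E)) (Tprime (m+3))" and v: "v \<in> V" and u: "u \<in> NH v"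
    and w: "w \<in> NH u" "w \<noteq> v" and cw: "card (NH v - {w}) \<ge> m+1"
  shows False
proof -
  let ?E = "snd (complement (V,E))"
  have uV: "u \<in> V" "u \<noteq> v" using u NH_mem by auto
  have wV: "w \<in> V" "w \<noteq> u" using w NH_mem by auto
  have eq: "NH v - {u,w} = (NH v - {w}) - {u}" by auto
  have cS: "card (NH v - {u,w}) \<ge> m" unfolding eq using cd1[of "NH v - {w}" u] cw by linarith
  have "contains (V,?E) (Tprime (m+3))"
  proof (rule emb_Tp[where S = "NH v - {u,w}" and c = v and a = u and a' = w])
    show "m \<ge> 2" using m5 by simp
    show "finite (NH v - {u,w})" using finNH by simp
    show "NH v - {u,w} \<subseteq> V" using NH_mem by blast
    show "\<forall>s\<in>NH v - {u,w}. {v,s} \<in> ?E" using compl_edge v by blast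
    show "distinct [v,u,w]" using uV wV w by auto
    show "{v,u} \<in> ?E" using compl_edge v u by blast
    show "{u,w} \<in> ?E" using compl_edge uV w by blast
  qed (use cS v uV wV NH_mem in auto)
  then show False using nT compl_eq by simp
qed

lemma noTs_cond:
  assumes nT: "\<not> contains (complement (V,E)) (Tstar (m+3))" and v: "v \<in> V" and u: "u \<in> NH v"
    and w: "w \<in> NH u" "w \<noteq> v" and x: "x \<in> NH w" "x \<noteq> u" "x \<noteq> v"
    and cw: "card (NH v - {w,x}) \<ge> m"
  shows False
proof -
  let ?E = "snd (complement (V,E))"
  have uV: "u \<in> V" "u \<noteq> v" using u NH_mem by auto
  have wV: "w \<in> V" "w \<noteq> u" using w NH_mem by auto
  have xV: "x \<in> V" "x \<noteq> w" using x NH_mem by auto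
  have eq: "NH v - {u,w,x} = (NH v - {w,x}) - {u}" by auto
  have cS: "card (NH v - {u,w,x}) \<ge> m - 1" unfolding eq using cd1[of "NH v - {w,x}" u] cw by linarith
  have "contains (V,?E) (Tstar (m+3))"
  proof (rule emb_Ts[where S = "NH v - {u,w,x}" and c = v and a = u and a' = w and a'' = x])
    show "m \<ge> 2" using m5 by simp
    show "finite (NH v - {u,w,x})" using finNH by simp
    show "NH v - {u,w,x} \<subseteq> V" using NH_mem by blast
    show "\<forall>s\<in>NH v - {u,w,x}. {v,s} \<in> ?E" using compl_edge v by blast
    show "distinct [v,u,w,x]" using uV wV xV w x by auto
    show "{v,u} \<in> ?E" using compl_edge v u by blast
    show "{u,w} \<in> ?E" using compl_edge uV w by blast
    show "{w,x} \<in> ?E" using compl_edge wV x by blast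
  qed (use cS v uV wV xV NH_mem in auto)
  then show False using nT compl_eq by simp
qed

lemma minv: obtains v where "v \<in> V" "\<forall>y\<in>V. card (N v) \<le> card (N y)"
proof -
  obtain c where "c \<in> V" using Vne by auto
  then obtain v where "v \<in> V" "\<forall>y. y \<in> V \<longrightarrow> card (N v) \<le> card (N y)"
    using ex_has_least_nat[of "\<lambda>x. x \<in> V" c "\<lambda>x. card (N x)"] by blast
  then show ?thesis using that by blast
qed

lemma NH_notN: "x \<in> NH v \<Longrightarrow> x \<notin> N v" using NH_mem by blast

lemma coreP: assumes nT: "\<not> contains (complement (V,E)) (Tprime (m+3))" shows PG
proof -
  obtain v where v: "v \<in> V" and mn: "\<forall>y\<in>V. card (N v) \<le> card (N y)" by (rule minv)
  have sum: "card (N v) + card (NH v) = 2*m" using card_N_NH[OF v] .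
  consider "card (N v) \<ge> m" | "card (N v) = m - 1" | "card (N v) \<le> m - 2" by linarith
  then show ?thesis
  proof cases
    case 1 then show ?thesis using core_deg mn by force
  next
    case 2
    have cNH: "card (NH v) = m+1" using sum 2 m5 by simp
    have C: "w \<in> N u" if u: "u \<in> NH v" and w: "w \<in> N v" for u w
    proof (rule ccontr)
      assume "w \<notin> N u"
      then have wu: "w \<in> NH u" using NH_mem N_V w u NH_notN by metis
      have "w \<notin> NH v" using w NH_notN by blast
      then have "NH v - {w} = NH v" by blast
      then show False using noTp_cond[OF nT v u wu] cNH w N_irr by fastforce
    qed
    obtain w0 where w0: "w0 \<in> N v" using pick0[of "N v"] 2 m5 by auto
    have "insert v (NH v) \<subseteq> N w0" using C w0 N_sym by blast
    moreover have "card (insert v (NH v)) = m+2" using cNH finNH NH_mem by simp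
    ultimately have dw: "card (N w0) \<ge> m+2" using card_mono[OF finN] by metis
    obtain a where a: "a \<in> NH v" using pick0[of "NH v"] cNH by auto
    obtain b where b: "b \<in> NH v" "b \<notin> {a,a}" using pick2[of "NH v" a a] cNH m5 by auto
    show ?thesis
    proof (rule big[of w0 a b])
      show "card (N a) \<ge> 4" "card (N b) \<ge> 4" using mn a b NH_mem 2 m5 by force+
    qed (use w0 N_V a b C N_sym dw in auto)
  next
    case 3
    have cNH: "card (NH v) \<ge> m+2" using sum 3 m5 by simp
    have C: "w = v" if u: "u \<in> NH v" and w: "w \<in> NH u" for u w
    proof (rule ccontr)
      assume "w \<noteq> v"
      moreover have "card (NH v - {w}) \<ge> m+1" using cd1[of "NH v" w] cNH by linarith
      ultimately show False using noTp_cond[OF nT v u w] by blast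
    qed
    have full: "V - {u,v} \<subseteq> N u" if u: "u \<in> NH v" for u
    proof
      fix y assume y: "y \<in> V - {u,v}"
      have "u \<in> V" using u NH_mem by blast
      then show "y \<in> N u" using split[of u y] y C[OF u] by blast
    qed
    have deg: "card (N u) \<ge> 2*m - 1" if u: "u \<in> NH v" for u
      using card_mono[OF finN full[OF u]] card_V2[of u v] u NH_mem v by auto
    obtain c where c: "c \<in> NH v" using pick0[of "NH v"] cNH by auto
    obtain a where a: "a \<in> NH v" "a \<notin> {c,c}" using pick2[of "NH v" c c] cNH m5 by auto
    obtain b where b: "b \<in> NH v" "b \<notin> {c,a}" using pick2[of "NH v" c a] cNH m5 by auto
    have "a \<in> N c" "b \<in> N c" using full[OF c] a b NH_mem by auto
    then show ?thesis
      using big[of c a b] deg[OF c] deg[OF a(1)] deg[OF b(1)] c b NH_mem m5 by force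
  qed
qed

end



context gr begin

lemma coreS: assumes nT: "\<not> contains (complement (V,E)) (Tstar (m+3))" shows PG
proof -
  obtain v where v: "v \<in> V" and mn: "\<forall>y\<in>V. card (N v) \<le> card (N y)" by (rule minv)
  have sum: "card (N v) + card (NH v) = 2*m" using card_N_NH[OF v] .
  consider "card (N v) \<ge> m" | "card (N v) = m - 1" | "card (N v) \<le> m - 2" by linarith
  then show ?thesis
  proof cases
    case 1 then show ?thesis using core_deg mn by force
  next
    case 2
    have cNH: "card (NH v) = m+1" using sum 2 m5 by simp
    have C: "x = u \<or> x = v" if u: "u \<in> NH v" and w: "w \<in> N v" "w \<in> NH u" and x: "x \<in> NH w" for u w x
    proof (rule ccontr)
      assume xx: "\<not> (x = u \<or> x = v)"
      have "w \<notin> NH v" using w NH_notN by blast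
      then have "NH v - {w,x} = NH v - {x}" by blast
      then have "card (NH v - {w,x}) \<ge> m" using cd1[of "NH v" x] cNH by simp
      moreover have "w \<noteq> v" using w N_irr by blast
      ultimately show False using noTs_cond[OF nT v u w(2) _ x] xx by blast
    qed
    obtain w0 where w0: "w0 \<in> N v" using pick0[of "N v"] 2 m5 by auto
    have w0V: "w0 \<in> V" "w0 \<noteq> v" using w0 N_V by auto
    have dw: "card (N w0) \<ge> m+2"
    proof (cases "\<forall>u\<in>NH v. u \<in> N w0")
      case True
      then have "insert v (NH v) \<subseteq> N w0" using w0 N_sym by blast
      moreover have "card (insert v (NH v)) = m+2" using cNH finNH NH_mem by simp
      ultimately show ?thesis using card_mono[OF finN] by metis
    next
      case False
      then obtain u where u: "u \<in> NH v" "u \<notin> N w0" by blast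
      have uV: "u \<in> V" "u \<noteq> w0" using u NH_mem w0 by auto
      have wu: "w0 \<in> NH u" using u uV w0V NH_mem N_sym by blast
      have "V - {w0,u} \<subseteq> N w0"
      proof
        fix y assume y: "y \<in> V - {w0,u}"
        show "y \<in> N w0"
        proof (cases "y = v")
          case True then show ?thesis using w0 N_sym by blast
        next
          case False
          then show ?thesis using split[of w0 y] y w0V C[OF u(1) w0 wu] by blast
        qed
      qed
      then have "card (V - {w0,u}) \<le> card (N w0)" by (rule card_mono[OF finN])
      then have "card (N w0) \<ge> 2*m - 1" using card_V2[of w0 u] w0V uV by simp
      then show ?thesis using m5 by linarith
    qed
    obtain a where a: "a \<in> N w0" using pick0[of "N w0"] dw by auto
    obtain b where b: "b \<in> N w0" "b \<notin> {a,a}" using pick2[of "N w0" a a] dw m5 by auto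
    show ?thesis
    proof (rule big[of w0 a b])
      show "card (N a) \<ge> 4" "card (N b) \<ge> 4" using mn a b N_V 2 m5 by force+
    qed (use w0V a b dw in auto)
  next
    case 3
    define D where "D = card (NH v)"
    have cNH: "D \<ge> m+2" using sum 3 m5 unfolding D_def by simp
    have C2: "x = u \<or> x = v" if u: "u \<in> NH v" and w: "w \<in> NH u" "w \<noteq> v" and x: "x \<in> NH w" for u w x
    proof (rule ccontr)
      assume xx: "\<not> (x = u \<or> x = v)"
      have "card (NH v - {w,x}) \<ge> m" using cd2[of "NH v" w x] cNH unfolding D_def by linarith
      then show False using noTs_cond[OF nT v u w x] xx by blast
    qed
    have deg: "card (N a) \<ge> D - 2" if a: "a \<in> NH v" for a
    proof -
      have aV: "a \<in> V" "a \<noteq> v" using a NH_mem by auto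
      show ?thesis
      proof (cases "\<exists>u1\<in>NH v. u1 \<in> NH a")
        case True
        then obtain u1 where u1: "u1 \<in> NH v" "u1 \<in> NH a" by blast
        have au: "a \<in> NH u1" using NH_sym aV u1 by blast
        have "NH v - {a,u1} \<subseteq> N a"
        proof
          fix y assume y: "y \<in> NH v - {a,u1}"
          show "y \<in> N a"
          proof (rule ccontr)
            assume "y \<notin> N a"
            then have "y \<in> NH a" using y NH_mem by auto
            then have "y = u1 \<or> y = v" using C2[OF u1(1) au aV(2)] by blast
            then show False using y NH_mem by auto
          qed
        qed
        then have "card (NH v - {a,u1}) \<le> card (N a)" by (rule card_mono[OF finN])
        then show ?thesis using cd2[of "NH v" a u1] unfolding D_def by linarith
      next
        case False
        have "NH v - {a} \<subseteq> N a"
        proof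
          fix y assume y: "y \<in> NH v - {a}"
          show "y \<in> N a"
          proof (rule ccontr)
            assume "y \<notin> N a"
            then have "y \<in> NH a" using y NH_mem by auto
            then show False using False y by blast
          qed
        qed
        then have "card (NH v - {a}) \<le> card (N a)" by (rule card_mono[OF finN])
        then show ?thesis using cd1[of "NH v" a] unfolding D_def by linarith
      qed
    qed
    show ?thesis
    proof (cases "N v = {}")
      case True
      have "NH v = V - {v}" using True NH_mem by auto
      then have D2: "D = 2*m" using cardV finV v unfolding D_def by simp
      obtain c where c: "c \<in> NH v" using pick0[of "NH v"] cNH unfolding D_def by auto
      have dc: "card (N c) \<ge> 2*m - 2" using deg[OF c] D2 by simp
      have "0 < card (N c)" using dc m5 by linarith
      then obtain a where a: "a \<in> N c" using pick0[of "N c"] by auto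
      have "2 < card (N c)" using dc m5 by linarith
      then obtain b where b: "b \<in> N c" "b \<notin> {a,a}" using pick2[of "N c" a a] by auto
      have inNH: "y \<in> NH v" if "y \<in> N c" for y
      proof -
        have "y \<noteq> v" using that True N_sym by blast
        then show ?thesis using that True N_V NH_mem by blast
      qed
      show ?thesis
      proof (rule big[of c a b])
        have "a \<in> NH v" "b \<in> NH v" using inNH a b(1) by blast+
        then show "card (N a) \<ge> 4" "card (N b) \<ge> 4" using deg[of a] deg[of b] D2 m5 by simp_all
      qed (use c NH_mem a b dc m5 in auto)
    next
      case False
      then obtain w where w: "w \<in> N v" by blast
      have wV: "w \<in> V" "w \<noteq> v" using w N_V by auto
      obtain A where A: "A \<subseteq> NH v" "A \<subseteq> N w" "card A \<ge> D - 1"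
      proof (cases "\<exists>u1\<in>NH v. u1 \<in> NH w")
        case True
        then obtain u1 where u1: "u1 \<in> NH v" "u1 \<in> NH w" by blast
        have wu: "w \<in> NH u1" using NH_sym wV u1 by blast
        have "NH v - {u1} \<subseteq> N w"
        proof
          fix y assume y: "y \<in> NH v - {u1}"
          show "y \<in> N w"
          proof (rule ccontr)
            assume "y \<notin> N w"
            moreover have "y \<noteq> w" using y w NH_notN by blast
            ultimately have "y \<in> NH w" using y NH_mem by auto
            then have "y = u1 \<or> y = v" using C2[OF u1(1) wu wV(2)] by blast
            then show False using y NH_mem by auto
          qed
        qed
        then show ?thesis using that[of "NH v - {u1}"] cd1[of "NH v" u1] unfolding D_def by blast
      next
        case False
        have "NH v \<subseteq> N w"
        proof
          fix y assume y: "y \<in> NH v"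
          show "y \<in> N w"
          proof (rule ccontr)
            assume "y \<notin> N w"
            moreover have "y \<noteq> w" using y w NH_notN by blast
            ultimately have "y \<in> NH w" using y NH_mem by auto
            then show False using False y by blast
          qed
        qed
        then show ?thesis using that[of "NH v"] unfolding D_def by auto
      qed
      have finA: "finite A" using A(1) finNH finite_subset by blast
      have "insert v A \<subseteq> N w" using A w N_sym by blast
      moreover have "v \<notin> A" using A(1) NH_mem by blast
      then have "card (insert v A) = card A + 1" using finA by simp
      moreover have "card (insert v A) \<le> card (N w)" using \<open>insert v A \<subseteq> N w\<close> by (rule card_mono[OF finN])
      ultimately have dw: "card (N w) \<ge> m+2" using A cNH \<open>card (insert v A) = card A + 1\<close> by linarith
      have cA: "0 < card A" "2 < card A" using A cNH m5 by linarith+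
      obtain a where a: "a \<in> A" using pick0[of A] cA by auto
      obtain b where b: "b \<in> A" "b \<notin> {a,a}" using pick2[of A a a] cA by auto
      show ?thesis
      proof (rule big[of w a b])
        have "a \<in> NH v" "b \<in> NH v" using A a b(1) by blast+
        then show "card (N a) \<ge> 4" "card (N b) \<ge> 4" using deg[of a] deg[of b] cNH m5 by simp_all
      qed (use wV A a b dw in auto)
    qed
  qed
qed

end



lemma lower_card:
  fixes f :: "nat \<Rightarrow> nat"
  assumes NN: "N \<le> 2*m" and K: "K \<subseteq> {0..<m+3}" "card K = m+1" and inj: "inj_on f {0..<m+3}"
    and img: "f ` K \<subseteq> {0..<N}" and same: "\<forall>k\<in>K. (f k < m) = b"
  shows False
proof -
  have injK: "inj_on f K" using inj K(1) inj_on_subset by blast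
  have "f ` K \<subseteq> {x\<in>{0..<N}. (x < m) = b}" using img same by auto
  moreover have "card {x\<in>{0..<N}. (x < m) = b} \<le> m"
  proof (cases b)
    case True
    then have "{x\<in>{0..<N}. (x < m) = b} \<subseteq> {0..<m}" by auto
    then have "card {x\<in>{0..<N}. (x < m) = b} \<le> card {0..<m}" by (intro card_mono) simp_all
    then show ?thesis by simp
  next
    case False
    then have "{x\<in>{0..<N}. (x < m) = b} \<subseteq> {m..<N}" by auto
    then have "card {x\<in>{0..<N}. (x < m) = b} \<le> card {m..<N}" by (intro card_mono) simp_all
    then show ?thesis using NN by simp
  qed
  moreover have "finite {x\<in>{0..<N}. (x < m) = b}" by simp
  ultimately have "card (f ` K) \<le> m" using card_mono le_trans by metis
  then show False using card_image[OF injK] K by simp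
qed

definition E0 :: "nat \<Rightarrow> nat \<Rightarrow> nat set set" where
  "E0 m N = {{x,y} | x y. x < N \<and> y < N \<and> x \<noteq> y \<and> (x < m) = (y < m)}"

lemma E0_edge: assumes "{x,y} \<in> E0 m N" shows "(x < m) = (y < m)"
proof -
  obtain a b where ab: "{x,y} = {a,b}" "(a < m) = (b < m)" using assms unfolding E0_def by blast
  then have "(x = a \<and> y = b) \<or> (x = b \<and> y = a)" by (simp add: doubleton_eq_iff)
  then show ?thesis using ab(2) by blast
qed

lemma E0_cedge: assumes "{x,y} \<in> snd (complement ({0..<N}, E0 m N))" shows "(x < m) \<noteq> (y < m)"
proof -
  obtain a b where ab: "{x,y} = {a,b}" "a < N" "b < N" "a \<noteq> b" "{a,b} \<notin> E0 m N"
    using assms unfolding complement_def by auto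
  have "(a < m) \<noteq> (b < m)"
  proof
    assume "(a < m) = (b < m)"
    then have "{a,b} \<in> E0 m N" unfolding E0_def using ab by blast
    then show False using ab by blast
  qed
  moreover have "(x = a \<and> y = b) \<or> (x = b \<and> y = a)" using ab(1) by (simp add: doubleton_eq_iff)
  ultimately show ?thesis by blast
qed

lemma E0_simple: "simple_graph ({0..<N}, E0 m N)"
  unfolding simple_graph_def E0_def by fastforce

lemma lower:
  assumes m: "m \<ge> 5" and NN: "N \<le> 2*m"
  shows "\<not> contains ({0..<N}, E0 m N) (T1 (m+3))" "\<not> contains ({0..<N}, E0 m N) (T2 (m+3))"
    "\<not> contains (complement ({0..<N}, E0 m N)) (Tprime (m+3))"
    "\<not> contains (complement ({0..<N}, E0 m N)) (Tstar (m+3))"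
proof -
  have cK: "card {0..m} = m+1" by simp
  have fTT1: "fst (T1 (m+3)) = {0..<m+3}" by (simp add: T1_def)
  have fTT2: "fst (T2 (m+3)) = {0..<m+3}" by (simp add: T2_def)
  have fTTprime: "fst (Tprime (m+3)) = {0..<m+3}" by (simp add: Tprime_def)
  have fTTstar: "fst (Tstar (m+3)) = {0..<m+3}" by (simp add: Tstar_def)
  have fC: "fst (complement ({0..<N}, E0 m N)) = {0..<N}" by (simp add: complement_def)
  have sub: "{0..m} \<subseteq> {0..<m+3}" by auto
  show "\<not> contains ({0..<N}, E0 m N) (T1 (m+3))"
  proof
    assume "contains ({0..<N}, E0 m N) (T1 (m+3))"
    then obtain f where f: "inj_on f {0..<m+3}" "f ` {0..<m+3} \<subseteq> {0..<N}"
      "\<forall>e\<in>snd (T1 (m+3)). f ` e \<in> E0 m N" using fTT1 unfolding contains_def by auto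
    have "\<forall>k\<in>{0..m}. (f k < m) = (f 0 < m)"
    proof
      fix k assume k: "k \<in> {0..m}"
      show "(f k < m) = (f 0 < m)"
      proof (cases "k = 0")
        case False
        then have "{0,k} \<in> snd (T1 (m+3))" using k unfolding T1_def by auto
        then have "{f 0, f k} \<in> E0 m N" using f(3) by force
        then show ?thesis using E0_edge by metis
      qed simp
    qed
    then show False using lower_card[OF NN sub cK f(1)] f(2) sub by blast
  qed
  show "\<not> contains ({0..<N}, E0 m N) (T2 (m+3))"
  proof
    assume "contains ({0..<N}, E0 m N) (T2 (m+3))"
    then obtain f where f: "inj_on f {0..<m+3}" "f ` {0..<m+3} \<subseteq> {0..<N}"
      "\<forall>e\<in>snd (T2 (m+3)). f ` e \<in> E0 m N" using fTT2 unfolding contains_def by auto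
    have "\<forall>k\<in>{0..m}. (f k < m) = (f 0 < m)"
    proof
      fix k assume k: "k \<in> {0..m}"
      show "(f k < m) = (f 0 < m)"
      proof (cases "k = 0")
        case False
        then have "{0,k} \<in> snd (T2 (m+3))" using k unfolding T2_def by auto
        then have "{f 0, f k} \<in> E0 m N" using f(3) by force
        then show ?thesis using E0_edge by metis
      qed simp
    qed
    then show False using lower_card[OF NN sub cK f(1)] f(2) sub by blast
  qed
  show "\<not> contains (complement ({0..<N}, E0 m N)) (Tprime (m+3))"
  proof
    assume "contains (complement ({0..<N}, E0 m N)) (Tprime (m+3))"
    then obtain f where f: "inj_on f {0..<m+3}" "f ` {0..<m+3} \<subseteq> {0..<N}"
      "\<forall>e\<in>snd (Tprime (m+3)). f ` e \<in> snd (complement ({0..<N}, E0 m N))"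
      using fTTprime fC unfolding contains_def by auto
    have cK': "card {1..m+1} = m+1" by simp
    have sub': "{1..m+1} \<subseteq> {0..<m+3}" by auto
    have "\<forall>k\<in>{1..m+1}. (f k < m) = (\<not> (f 0 < m))"
    proof
      fix k assume k: "k \<in> {1..m+1}"
      then have "{0,k} \<in> snd (Tprime (m+3))" unfolding Tprime_def by auto
      then have "{f 0, f k} \<in> snd (complement ({0..<N}, E0 m N))" using f(3) by force
      then show "(f k < m) = (\<not> (f 0 < m))" using E0_cedge by metis
    qed
    then show False using lower_card[OF NN sub' cK' f(1)] f(2) sub' by blast
  qed
  show "\<not> contains (complement ({0..<N}, E0 m N)) (Tstar (m+3))"
  proof
    assume "contains (complement ({0..<N}, E0 m N)) (Tstar (m+3))"
    then obtain f where f: "inj_on f {0..<m+3}" "f ` {0..<m+3} \<subseteq> {0..<N}"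
      "\<forall>e\<in>snd (Tstar (m+3)). f ` e \<in> snd (complement ({0..<N}, E0 m N))"
      using fTTstar fC unfolding contains_def by auto
    let ?K = "insert (m+2) {1..m}"
    have cK': "card ?K = m+1" by simp
    have sub': "?K \<subseteq> {0..<m+3}" by auto
    have st: "\<forall>k\<in>{1..m}. (f k < m) = (\<not> (f 0 < m))"
    proof
      fix k assume k: "k \<in> {1..m}"
      then have "{0,k} \<in> snd (Tstar (m+3))" unfolding Tstar_def by auto
      then have "{f 0, f k} \<in> snd (complement ({0..<N}, E0 m N))" using f(3) by force
      then show "(f k < m) = (\<not> (f 0 < m))" using E0_cedge by metis
    qed
    have "{m, m+1} \<in> snd (Tstar (m+3))" "{m+1, m+2} \<in> snd (Tstar (m+3))" unfolding Tstar_def by auto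
    then have "{f m, f (m+1)} \<in> snd (complement ({0..<N}, E0 m N))"
      "{f (m+1), f (m+2)} \<in> snd (complement ({0..<N}, E0 m N))" using f(3) by force+
    then have "(f (m+1) < m) \<noteq> (f m < m)" "(f (m+2) < m) \<noteq> (f (m+1) < m)" using E0_cedge by metis+
    moreover have "(f m < m) = (\<not> (f 0 < m))" using st m by simp
    ultimately have "(f (m+2) < m) = (\<not> (f 0 < m))" by blast
    then have "\<forall>k\<in>?K. (f k < m) = (\<not> (f 0 < m))" using st by blast
    then show False using lower_card[OF NN sub' cK' f(1)] f(2) sub' by blast
  qed
qed

lemma upper:
  assumes m5: "m \<ge> 5" and sg: "simple_graph ({0..<2*m+1}, E)"
  shows "(contains ({0..<2*m+1},E) (T1 (m+3)) \<and> contains ({0..<2*m+1},E) (T2 (m+3)))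
           \<or> contains (complement ({0..<2*m+1},E)) (Tprime (m+3))"
    and "(contains ({0..<2*m+1},E) (T1 (m+3)) \<and> contains ({0..<2*m+1},E) (T2 (m+3)))
           \<or> contains (complement ({0..<2*m+1},E)) (Tstar (m+3))"
proof -
  interpret gr "{0..<2*m+1}" E m
    by unfold_locales (use m5 sg in \<open>auto simp: simple_graph_def\<close>)
  show "(contains ({0..<2*m+1},E) (T1 (m+3)) \<and> contains ({0..<2*m+1},E) (T2 (m+3)))
           \<or> contains (complement ({0..<2*m+1},E)) (Tprime (m+3))" using coreP by blast
  show "(contains ({0..<2*m+1},E) (T1 (m+3)) \<and> contains ({0..<2*m+1},E) (T2 (m+3)))
           \<or> contains (complement ({0..<2*m+1},E)) (Tstar (m+3))" using coreS by blast
qed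

lemma ramsey_eq:
  assumes m5: "m \<ge> 5" and T: "T = T1 (m+3) \<or> T = T2 (m+3)" and S: "S = Tprime (m+3) \<or> S = Tstar (m+3)"
  shows "ramsey T S = 2*m+1"
  unfolding ramsey_def
proof (rule Least_equality)
  show "0 < 2*m+1 \<and> (\<forall>E. simple_graph ({0..<2*m+1}, E) \<longrightarrow>
        contains ({0..<2*m+1::nat}, E) T \<or> contains (complement ({0..<2*m+1}, E)) S)"
  proof (intro conjI allI impI)
    fix E assume sg: "simple_graph ({0..<2*m+1}, E)"
    show "contains ({0..<2*m+1::nat}, E) T \<or> contains (complement ({0..<2*m+1}, E)) S"
      using upper(1)[OF m5 sg] upper(2)[OF m5 sg] T S by blast
  qed simp
next
  fix y assume y: "0 < y \<and> (\<forall>E. simple_graph ({0..<y}, E) \<longrightarrow>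
        contains ({0..<y::nat}, E) T \<or> contains (complement ({0..<y}, E)) S)"
  show "2*m+1 \<le> y"
  proof (rule ccontr)
    assume "\<not> 2*m+1 \<le> y"
    then have yy: "y \<le> 2*m" by simp
    have "contains ({0..<y}, E0 m y) T \<or> contains (complement ({0..<y}, E0 m y)) S"
      using y E0_simple by blast
    then show False using lower[OF m5 yy] T S by blast
  qed
qed

theorem theorem4p2:
  fixes n i :: nat
  assumes "n \<ge> 8" and "i \<in> {1, 2}"
  shows "ramsey (Ti i n) (Tprime n) = 2 * n - 5 \<and> ramsey (Ti i n) (Tstar n) = 2 * n - 5"
proof -
  define m where "m = n - 3"
  have n: "n = m + 3" and m5: "m \<ge> 5" and e: "2 * n - 5 = 2*m+1" using assms(1) unfolding m_def by auto
  have T: "Ti i n = T1 (m+3) \<or> Ti i n = T2 (m+3)" unfolding Ti_def n by simp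
  show ?thesis unfolding e using ramsey_eq[OF m5 T] n by simp
qed


end
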